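(* Let $(Q,\infty)$, $\alpha$, $\beta$, $\bar\zeta$, $\mathcal C$, $0\in I$ be as in the context, let $d\ge1$ be an integer with $d\beta_i\le\alpha_i$ for all $i\in I$, let $\zeta\in\mathcal C$, and let $\zeta^\sharp$ and $U$ be as in the context. Then a representation $\rho_\sharp$ of $Q^\sharp$ on $U$ is $\zeta^\sharp$-stable if and only if it is $\bar\zeta$-semistable and every sub-representation $S\subseteq U$ with $\sum_{i\in I}\bar\zeta_i\dim S_i=0$ and $S_{\infty'}=\mathbb C$ equals $U$.
   Context: A framed quiver is a quiver with relations $Q=(Q_0,Q_1,Q_2)$ (arrows $a$ from $\mathrm{out}(a)$ to $\mathrm{in}(a)$; each relation $l\in Q_2$ a linear combination of paths with common beginning $\mathrm{out}(l)$ and ending $\mathrm{in}(l)$) together with a vertex $\infty\in Q_0$; $I=Q_0\setminus\{\infty\}$ and $\mathrm{out}(l),\mathrm{in}(l)\in I$ for all $l$. Fix $\alpha\in\mathbb Z_{\ge0}^{Q_0}$ with $\alpha_\infty=1$. Walls are the hyperplanes $(\beta')^\perp=\{\zeta\in\mathbb R^I\mid\sum_i\zeta_i\beta'_i=0\}$ for $\beta'\in\mathbb Z_{\ge0}^I\setminus\{0\}$ with $\beta'_i\le\alpha_i$ for all $i$; chambers are the connected components of the complement of the union of walls. Fix such a $\beta$ and $\bar\zeta\in\beta^\perp$ lying on no wall other than $\beta^\perp$; let $\mathcal C$ be the chamber whose closure contains $\bar\zeta$ and on which $\sum_i\zeta_i\beta_i<0$. Fix $0\in I$ with $\beta_0\neq0$.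 The quiver $Q^\sharp$ has vertices $Q_0\sqcup\{\infty'\}$, arrows $Q_1$ plus one new arrow $\infty'\to0$, and relations $Q_2$. Let $U=\bigoplus_{v\in Q_0\sqcup\{\infty'\}}U_v$ with $\dim U_i=d\beta_i$ ($i\in I$), $U_\infty=0$, $U_{\infty'}=\mathbb C$. Define $\zeta^\sharp$ by $\zeta^\sharp_i=\zeta_i$ ($i\in I$), $\zeta^\sharp_\infty=0$, $\zeta^\sharp_{\infty'}=-\sum_{i\in I}\zeta_i d\beta_i$. A representation of $Q^\sharp$ on $U$ is $\zeta^\sharp$-stable if every sub-representation $S$ (graded subspace stable under all arrow maps) with $0\ne S\ne U$ satisfies $\sum_v\zeta^\sharp_v\dim S_v<0$. It is $\bar\zeta$-semistable if every sub-representation $S$ satisfies $\sum_{i\in I}\bar\zeta_i\dim S_i\le0$. *)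

theory Defs
  imports "HOL-Analysis.Analysis" "HOL-Library.Function_Algebras"
begin

text \<open>A vector of \<open>\<complex>^n\<close> is modelled as a function \<open>nat \<Rightarrow> complex\<close> vanishing
  from index \<open>n\<close> on. Scalar multiplication is pointwise.\<close>

definition cscale :: "complex \<Rightarrow> (nat \<Rightarrow> complex) \<Rightarrow> (nat \<Rightarrow> complex)" where
  "cscale c x = (\<lambda>i. c * x i)"

definition cdim :: "(nat \<Rightarrow> complex) set \<Rightarrow> nat" where
  "cdim S = vector_space.dim cscale S"

definition csubspace :: "(nat \<Rightarrow> complex) set \<Rightarrow> bool" where
  "csubspace S = module.subspace cscale S"

text \<open>The graded space \<open>U = \<Oplus>_v U_v\<close> with \<open>dim U_v = n v\<close>.\<close>
definition coord_space :: "('v \<Rightarrow> nat) \<Rightarrow> 'v \<Rightarrow> (nat \<Rightarrow> complex) set" where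
  "coord_space n v = {x. \<forall>i\<ge>n v. x i = 0}"

text \<open>Arrows have source \<open>s a\<close> (= out) and target \<open>t a\<close> (= in). A representation on
  \<open>U\<close> assigns to each arrow a matrix \<open>\<rho> a\<close> (only the entries \<open>j < n (t a)\<close>, \<open>i < n (s a)\<close>
  matter), i.e. a linear map \<open>U_{s a} \<rightarrow> U_{t a}\<close>.\<close>

definition arr_apply ::
  "('e \<Rightarrow> 'v) \<Rightarrow> ('e \<Rightarrow> 'v) \<Rightarrow> ('v \<Rightarrow> nat) \<Rightarrow> ('e \<Rightarrow> nat \<Rightarrow> nat \<Rightarrow> complex) \<Rightarrow> 'e
     \<Rightarrow> (nat \<Rightarrow> complex) \<Rightarrow> (nat \<Rightarrow> complex)" where
  "arr_apply s t n \<rho> a x = (\<lambda>j. if j < n (t a) then (\<Sum>i<n (s a). \<rho> a j i * x i) else 0)"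

fun is_path :: "('e \<Rightarrow> 'v) \<Rightarrow> ('e \<Rightarrow> 'v) \<Rightarrow> 'v \<Rightarrow> 'v \<Rightarrow> 'e list \<Rightarrow> bool" where
  "is_path s t v w [] = (v = w)"
| "is_path s t v w (a # p) = (s a = v \<and> is_path s t (t a) w p)"

fun path_apply ::
  "('e \<Rightarrow> 'v) \<Rightarrow> ('e \<Rightarrow> 'v) \<Rightarrow> ('v \<Rightarrow> nat) \<Rightarrow> ('e \<Rightarrow> nat \<Rightarrow> nat \<Rightarrow> complex) \<Rightarrow> 'e list
     \<Rightarrow> (nat \<Rightarrow> complex) \<Rightarrow> (nat \<Rightarrow> complex)" where
  "path_apply s t n \<rho> [] x = x"
| "path_apply s t n \<rho> (a # p) x = path_apply s t n \<rho> p (arr_apply s t n \<rho> a x)"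

text \<open>A relation is a triple \<open>(out l, in l, terms)\<close> where terms is a list of
  (coefficient, path) pairs; the relation is the linear combination of the paths.\<close>
definition is_rep ::
  "('e \<Rightarrow> 'v) \<Rightarrow> ('e \<Rightarrow> 'v) \<Rightarrow> ('v \<times> 'v \<times> (complex \<times> 'e list) list) set \<Rightarrow> ('v \<Rightarrow> nat)
     \<Rightarrow> ('e \<Rightarrow> nat \<Rightarrow> nat \<Rightarrow> complex) \<Rightarrow> bool" where
  "is_rep s t rels n \<rho> \<longleftrightarrow>
     (\<forall>(v, w, l) \<in> rels. \<forall>x \<in> coord_space n v.
        sum_list (map (\<lambda>(c, p). cscale c (path_apply s t n \<rho> p x)) l) = 0)"

definition is_subrep ::
  "('e \<Rightarrow> 'v) \<Rightarrow> ('e \<Rightarrow> 'v) \<Rightarrow> ('v \<Rightarrow> nat) \<Rightarrow> ('e \<Rightarrow> nat \<Rightarrow> nat \<Rightarrow> complex)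
     \<Rightarrow> ('v \<Rightarrow> (nat \<Rightarrow> complex) set) \<Rightarrow> bool" where
  "is_subrep s t n \<rho> S \<longleftrightarrow>
     (\<forall>v. csubspace (S v) \<and> S v \<subseteq> coord_space n v) \<and>
     (\<forall>a. \<forall>x \<in> S (s a). arr_apply s t n \<rho> a x \<in> S (t a))"

definition stable ::
  "('e \<Rightarrow> 'v::finite) \<Rightarrow> ('e \<Rightarrow> 'v) \<Rightarrow> ('v \<Rightarrow> nat) \<Rightarrow> ('e \<Rightarrow> nat \<Rightarrow> nat \<Rightarrow> complex)
     \<Rightarrow> ('v \<Rightarrow> real) \<Rightarrow> bool" where
  "stable s t n \<rho> \<theta> \<longleftrightarrow>
     (\<forall>S. is_subrep s t n \<rho> S \<longrightarrow> S \<noteq> (\<lambda>_. {0}) \<longrightarrow> S \<noteq> coord_space n \<longrightarrow>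
        (\<Sum>v\<in>UNIV. \<theta> v * real (cdim (S v))) < 0)"

definition semistable ::
  "('e \<Rightarrow> 'v::finite) \<Rightarrow> ('e \<Rightarrow> 'v) \<Rightarrow> ('v \<Rightarrow> nat) \<Rightarrow> ('e \<Rightarrow> nat \<Rightarrow> nat \<Rightarrow> complex)
     \<Rightarrow> ('v \<Rightarrow> real) \<Rightarrow> bool" where
  "semistable s t n \<rho> \<theta> \<longleftrightarrow>
     (\<forall>S. is_subrep s t n \<rho> S \<longrightarrow> (\<Sum>v\<in>UNIV. \<theta> v * real (cdim (S v))) \<le> 0)"

text \<open>\<open>\<real>^I\<close> is modelled as the functions \<open>'v \<Rightarrow> real\<close> vanishing at \<open>\<infinity>\<close>.\<close>
definition RI :: "'v \<Rightarrow> ('v \<Rightarrow> real) set" where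
  "RI vinf = {z. z vinf = 0}"

definition pairing :: "'v \<Rightarrow> ('v \<Rightarrow> real) \<Rightarrow> ('v \<Rightarrow> nat) \<Rightarrow> real" where
  "pairing vinf z b = (\<Sum>i\<in>UNIV - {vinf}. z i * real (b i))"

definition wall_vec :: "'v \<Rightarrow> ('v \<Rightarrow> nat) \<Rightarrow> ('v \<Rightarrow> nat) \<Rightarrow> bool" where
  "wall_vec vinf \<alpha> b \<longleftrightarrow> (\<exists>i. i \<noteq> vinf \<and> b i \<noteq> 0) \<and> (\<forall>i. i \<noteq> vinf \<longrightarrow> b i \<le> \<alpha> i)"

definition wall :: "'v::finite \<Rightarrow> ('v \<Rightarrow> nat) \<Rightarrow> ('v \<Rightarrow> real) set" where
  "wall vinf b = {z \<in> RI vinf. pairing vinf z b = 0}"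

definition wall_complement :: "'v::finite \<Rightarrow> ('v \<Rightarrow> nat) \<Rightarrow> ('v \<Rightarrow> real) set" where
  "wall_complement vinf \<alpha> = RI vinf - \<Union>{wall vinf b | b. wall_vec vinf \<alpha> b}"

definition chambers :: "'v::finite \<Rightarrow> ('v \<Rightarrow> nat) \<Rightarrow> ('v \<Rightarrow> real) set set" where
  "chambers vinf \<alpha> = {connected_component_set (wall_complement vinf \<alpha>) z | z. z \<in> wall_complement vinf \<alpha>}"

section \<open>The quiver \<open>Q^\<sharp>\<close>: vertices \<open>'v option\<close> (None = \<open>\<infinity>'\<close>), arrows \<open>'e option\<close>
  (None = the new arrow \<open>\<infinity>' \<rightarrow> 0\<close>)\<close>

definition src_sharp :: "('e \<Rightarrow> 'v) \<Rightarrow> 'e option \<Rightarrow> 'v option" where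
  "src_sharp s e = (case e of None \<Rightarrow> None | Some a \<Rightarrow> Some (s a))"

definition tgt_sharp :: "('e \<Rightarrow> 'v) \<Rightarrow> 'v \<Rightarrow> 'e option \<Rightarrow> 'v option" where
  "tgt_sharp t v0 e = (case e of None \<Rightarrow> Some v0 | Some a \<Rightarrow> Some (t a))"

definition rels_sharp ::
  "('v \<times> 'v \<times> (complex \<times> 'e list) list) set
     \<Rightarrow> ('v option \<times> 'v option \<times> (complex \<times> 'e option list) list) set" where
  "rels_sharp rels = {(Some v, Some w, map (\<lambda>(c, p). (c, map Some p)) l) | v w l. (v, w, l) \<in> rels}"

definition dims_sharp :: "'v \<Rightarrow> ('v \<Rightarrow> nat) \<Rightarrow> nat \<Rightarrow> 'v option \<Rightarrow> nat" where
  "dims_sharp vinf \<beta> d x = (case x of None \<Rightarrow> 1 | Some i \<Rightarrow> if i = vinf then 0 else d * \<beta> i)"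

definition zeta_sharp :: "'v::finite \<Rightarrow> ('v \<Rightarrow> nat) \<Rightarrow> nat \<Rightarrow> ('v \<Rightarrow> real) \<Rightarrow> 'v option \<Rightarrow> real" where
  "zeta_sharp vinf \<beta> d z x = (case x of
      None \<Rightarrow> - (\<Sum>i\<in>UNIV - {vinf}. z i * real (d * \<beta> i))
    | Some i \<Rightarrow> if i = vinf then 0 else z i)"

definition ext_I :: "'v \<Rightarrow> ('v \<Rightarrow> real) \<Rightarrow> 'v option \<Rightarrow> real" where
  "ext_I vinf z x = (case x of None \<Rightarrow> 0 | Some i \<Rightarrow> if i = vinf then 0 else z i)"

end

theory Submission
  imports Defs
begin


lemma sum_fun_apply: "(sum g A) (i::nat) = (\<Sum>x\<in>A. g x i :: complex)"
  by (induction A rule: infinite_finite_induct) auto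

lemma cvs: "vector_space cscale"
  by unfold_locales (auto simp: cscale_def fun_eq_iff algebra_simps)

interpretation cvs: vector_space cscale by (rule cvs)

definition delta :: "nat \<Rightarrow> nat \<Rightarrow> complex" where
  "delta j = (\<lambda>i. if i = j then 1 else 0)"

lemma coord_subspace: "csubspace (coord_space n v)"
  unfolding csubspace_def cvs.subspace_def coord_space_def by (auto simp: cscale_def)

lemma delta_inj: "inj delta"
  by (auto simp: inj_def delta_def fun_eq_iff)

lemma span_delta: "cvs.span (delta ` {..<m}) = {x. \<forall>i\<ge>m. x i = 0}"
proof
  show "cvs.span (delta ` {..<m}) \<subseteq> {x. \<forall>i\<ge>m. x i = 0}"
    using coord_subspace[of "\<lambda>_. m" undefined]
    by (intro cvs.span_minimal) (auto simp: delta_def csubspace_def coord_space_def)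
  show "{x. \<forall>i\<ge>m. x i = 0} \<subseteq> cvs.span (delta ` {..<m})"
  proof
    fix x :: "nat \<Rightarrow> complex" assume x: "x \<in> {x. \<forall>i\<ge>m. x i = 0}"
    have "x = (\<Sum>j<m. cscale (x j) (delta j))"
    proof
      fix i
      have "(\<Sum>j<m. cscale (x j) (delta j)) i = (\<Sum>j<m. if i = j then x j else 0)"
        unfolding sum_fun_apply by (rule sum.cong) (auto simp: cscale_def delta_def)
      then show "x i = (\<Sum>j<m. cscale (x j) (delta j)) i"
        using x by (cases "i < m") auto
    qed
    also have "\<dots> \<in> cvs.span (delta ` {..<m})"
      by (intro cvs.span_sum cvs.span_scale cvs.span_base) auto
    finally show "x \<in> cvs.span (delta ` {..<m})" .
  qed
qed

lemma indep_delta: "cvs.independent (delta ` {..<m})"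
proof (rule cvs.independent_if_scalars_zero)
  fix f x assume s: "(\<Sum>x\<in>delta ` {..<m}. cscale (f x) x) = 0" and x: "x \<in> delta ` {..<m}"
  then obtain j where j: "j < m" "x = delta j" by auto
  have "0 = (\<Sum>x\<in>delta ` {..<m}. cscale (f x) x) j" using s by simp
  also have "\<dots> = (\<Sum>k<m. f (delta k) * delta k j)"
    by (simp add: sum_fun_apply sum.reindex[OF inj_on_subset[OF delta_inj]] cscale_def)
  also have "\<dots> = (\<Sum>k<m. if j = k then f (delta k) else 0)"
    by (rule sum.cong) (auto simp: delta_def)
  also have "\<dots> = f (delta j)"
    using j by simp
  finally show "f x = 0" using j by simp
qed simp

lemma card_delta: "card (delta ` {..<m}) = m"
  by (simp add: card_image inj_on_subset[OF delta_inj])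

lemma cdim_coord: "cdim (coord_space n v) = n v"
  unfolding cdim_def coord_space_def
  by (metis card_delta cvs.dim_span_eq_card_independent indep_delta span_delta)

lemma cdim_le:
  assumes "S \<subseteq> coord_space n v" shows "cdim S \<le> n v"
  unfolding cdim_def
  by (metis assms card_delta coord_space_def cvs.dim_le_card finite_imageI finite_lessThan span_delta)

lemma cdim_full:
  assumes sub: "csubspace S" and le: "S \<subseteq> coord_space n v" and eq: "cdim S = n v"
  shows "S = coord_space n v"
proof -
  obtain B where B: "B \<subseteq> S" "cvs.independent B" "S \<subseteq> cvs.span B" "card B = cdim S"
    using cvs.basis_exists unfolding cdim_def by blast
  have fin: "finite B"
    using cvs.independent_span_bound[of "delta ` {..<n v}" B] B le span_delta[of "n v"]
    by (auto simp: coord_space_def)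
  have "coord_space n v \<subseteq> cvs.span B"
  proof
    fix x assume x: "x \<in> coord_space n v"
    show "x \<in> cvs.span B"
    proof (rule ccontr)
      assume nx: "x \<notin> cvs.span B"
      then have "cvs.independent (insert x B)" using B(2) cvs.independent_insertI by blast
      moreover have "insert x B \<subseteq> cvs.span (delta ` {..<n v})"
        using x B(1) le span_delta[of "n v"] by (auto simp: coord_space_def)
      ultimately have "card (insert x B) \<le> n v"
        using cvs.independent_span_bound[of "delta ` {..<n v}" "insert x B"] card_delta by auto
      moreover have "x \<notin> B" using nx cvs.span_base by blast
      ultimately show False using fin B(4) eq by simp
    qed
  qed
  moreover have "cvs.span B \<subseteq> S"
    using B(1) sub by (intro cvs.span_minimal) (auto simp: csubspace_def)
  ultimately show ?thesis using le by blast
qed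

lemma cdim_zero:
  assumes sub: "csubspace S" and le: "S \<subseteq> coord_space n v" and eq: "cdim S = 0"
  shows "S = {0}"
proof -
  obtain B where B: "B \<subseteq> S" "cvs.independent B" "S \<subseteq> cvs.span B" "card B = cdim S"
    using cvs.basis_exists unfolding cdim_def by blast
  have fin: "finite B"
    using cvs.independent_span_bound[of "delta ` {..<n v}" B] B le span_delta[of "n v"]
    by (auto simp: coord_space_def)
  then have "B = {}" using B(4) eq by simp
  then have "S \<subseteq> {0}" using B(3) by simp
  moreover have "0 \<in> S" using sub unfolding csubspace_def cvs.subspace_def by simp
  ultimately show ?thesis by blast
qed

lemma cdim_0: "cdim {0} = 0"
  unfolding cdim_def using cvs.dim_eq_card[of "{}" "{0}"] cvs.independent_empty by simp



lemma pairing_cont: "continuous_on UNIV (\<lambda>z. pairing vinf z b)"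
  unfolding pairing_def
  by (intro continuous_on_sum continuous_on_mult_right continuous_on_product_coordinates)

lemma chamber_sign_gen:
  fixes f :: "('v::finite \<Rightarrow> real) \<Rightarrow> real"
  assumes C: "C \<in> chambers vinf \<alpha>" and z: "\<zeta> \<in> C" and zb: "zbar \<in> closure C"
    and f: "continuous_on UNIV f" and nz: "\<forall>z\<in>C. f z \<noteq> 0" and neg: "f \<zeta> < 0"
  shows "f zbar \<le> 0"
proof -
  obtain z0 where Cdef: "C = connected_component_set (wall_complement vinf \<alpha>) z0"
    using C unfolding chambers_def by blast
  have conn: "connected C" unfolding Cdef by (rule connected_connected_component)
  have "connected (f ` C)"
    using conn f by (intro connected_continuous_image) (auto intro: continuous_on_subset)
  have "C \<subseteq> {z. f z \<le> 0}"
  proof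
    fix y assume y: "y \<in> C"
    show "y \<in> {z. f z \<le> 0}"
    proof (rule ccontr)
      assume "y \<notin> {z. f z \<le> 0}"
      then have "f y > 0" by simp
      then have "0 \<in> f ` C"
        using \<open>connected (f ` C)\<close> y z neg unfolding connected_iff_interval
        by (meson imageI less_imp_le)
      then show False using nz by auto
    qed
  qed
  moreover have "closed {z. f z \<le> 0}"
    using f by (intro closed_Collect_le) auto
  ultimately have "closure C \<subseteq> {z. f z \<le> 0}" by (rule closure_minimal)
  then show ?thesis using zb by auto
qed

lemma chamber_nz:
  assumes C: "C \<in> chambers vinf \<alpha>" and y: "y \<in> C" and w: "wall_vec vinf \<alpha> b"
  shows "pairing vinf y b \<noteq> 0"
proof -
  obtain z0 where Cdef: "C = connected_component_set (wall_complement vinf \<alpha>) z0"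
    using C unfolding chambers_def by blast
  have "y \<in> wall_complement vinf \<alpha>" using y connected_component_subset Cdef by blast
  then show ?thesis using w unfolding wall_complement_def wall_def by blast
qed

lemma chamber_sign:
  assumes C: "C \<in> chambers vinf \<alpha>" and z: "\<zeta> \<in> C" and zb: "zbar \<in> closure C"
    and w: "wall_vec vinf \<alpha> b"
  shows "pairing vinf zbar b > 0 \<Longrightarrow> pairing vinf \<zeta> b > 0"
    and "pairing vinf zbar b < 0 \<Longrightarrow> pairing vinf \<zeta> b < 0"
proof -
  have nz: "\<forall>y\<in>C. pairing vinf y b \<noteq> 0" using chamber_nz[OF C _ w] by blast
  show "pairing vinf zbar b > 0 \<Longrightarrow> pairing vinf \<zeta> b > 0"
    using chamber_sign_gen[OF C z zb pairing_cont nz] nz z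
    by (metis linorder_neqE_linordered_idom not_le)
  show "pairing vinf zbar b < 0 \<Longrightarrow> pairing vinf \<zeta> b < 0"
  proof -
    assume a: "pairing vinf zbar b < 0"
    have c: "continuous_on UNIV (\<lambda>y. - pairing vinf y b)"
      using pairing_cont by (intro continuous_on_minus)
    have nz': "\<forall>y\<in>C. - pairing vinf y b \<noteq> 0" using nz by simp
    have n0: "pairing vinf \<zeta> b \<noteq> 0" using nz z by blast
    show ?thesis
    proof (rule ccontr)
      assume "\<not> pairing vinf \<zeta> b < 0"
      then have "- pairing vinf \<zeta> b < 0" using n0 by linarith
      then show False using chamber_sign_gen[OF C z zb c nz'] a by linarith
    qed
  qed
qed

lemma pairing_lin:
  "pairing vinf (\<lambda>i. a * x i - c * y i) b = a * pairing vinf x b - c * pairing vinf y b"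
  unfolding pairing_def by (simp add: sum_subtractf sum_distrib_left algebra_simps)

lemma pairing_delta:
  fixes b :: "'v::finite \<Rightarrow> nat"
  assumes "v0 \<noteq> vinf"
  shows "pairing vinf (\<lambda>i. if i = v0 then 1 else 0) b = real (b v0)"
proof -
  have "pairing vinf (\<lambda>i. if i = v0 then 1 else 0) b = (\<Sum>i\<in>UNIV - {vinf}. if i = v0 then real (b i) else 0)"
    unfolding pairing_def by (rule sum.cong) auto
  also have "\<dots> = real (b v0)" using assms by (subst sum.delta) auto
  finally show ?thesis .
qed

lemma prop_sign:
  fixes \<zeta> :: "'v::finite \<Rightarrow> real"
  assumes eqw: "wall vinf b = wall vinf \<beta>" and zRI: "\<zeta> \<in> RI vinf"
    and nz: "pairing vinf \<zeta> b \<noteq> 0" and neg: "pairing vinf \<zeta> \<beta> < 0"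
    and v0: "v0 \<noteq> vinf" "\<beta> v0 \<noteq> 0"
  shows "pairing vinf \<zeta> b < 0"
proof -
  define e where "e = (\<lambda>i. if i = v0 then 1 else (0::real))"
  define z where "z = (\<lambda>i. real (\<beta> v0) * \<zeta> i - pairing vinf \<zeta> \<beta> * e i)"
  have zRI': "z \<in> RI vinf" using zRI v0 by (simp add: RI_def z_def e_def)
  have "pairing vinf z \<beta> = 0"
    unfolding z_def pairing_lin using pairing_delta[OF v0(1)] by (simp add: e_def)
  then have "z \<in> wall vinf \<beta>" using zRI' by (simp add: wall_def)
  then have "z \<in> wall vinf b" using eqw by simp
  then have "pairing vinf z b = 0" by (simp add: wall_def)
  then have "real (\<beta> v0) * pairing vinf \<zeta> b = pairing vinf \<zeta> \<beta> * real (b v0)"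
    unfolding z_def pairing_lin using pairing_delta[OF v0(1)] by (simp add: e_def)
  moreover have "pairing vinf \<zeta> \<beta> * real (b v0) \<le> 0"
    using neg by (simp add: mult_nonpos_nonneg)
  ultimately have "real (\<beta> v0) * pairing vinf \<zeta> b \<le> 0" by simp
  then have "pairing vinf \<zeta> b \<le> 0" using v0(2)
    by (simp add: mult_le_0_iff)
  then show ?thesis using nz by simp
qed



lemma sum_option_UNIV:
  "(\<Sum>x\<in>(UNIV::'v::finite option set). g x) = g None + (\<Sum>i\<in>UNIV. g (Some i))"
  by (simp add: UNIV_option_conv sum.reindex)

lemma sum_drop_vinf:
  fixes h :: "'v::finite \<Rightarrow> real"
  shows "(\<Sum>i\<in>UNIV. (if i = vinf then 0 else h i)) = (\<Sum>i\<in>UNIV-{vinf}. h i)"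
proof -
  have "(\<Sum>i\<in>UNIV. (if i = vinf then 0 else h i)) = (\<Sum>i\<in>UNIV-{vinf}. (if i = vinf then 0 else h i))"
    by (rule sum.mono_neutral_right) auto
  also have "\<dots> = (\<Sum>i\<in>UNIV-{vinf}. h i)" by (rule sum.cong) auto
  finally show ?thesis .
qed

lemma ext_sum:
  fixes f :: "'v::finite option \<Rightarrow> nat"
  shows "(\<Sum>x\<in>UNIV. ext_I vinf z x * real (f x)) = pairing vinf z (\<lambda>i. f (Some i))"
proof -
  have "(\<Sum>x\<in>UNIV. ext_I vinf z x * real (f x)) = (\<Sum>i\<in>UNIV. (if i = vinf then 0 else z i * real (f (Some i))))"
    unfolding sum_option_UNIV by (simp add: ext_I_def; rule sum.cong; simp)
  also have "\<dots> = pairing vinf z (\<lambda>i. f (Some i))"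
    by (simp add: sum_drop_vinf pairing_def)
  finally show ?thesis .
qed

lemma zs_sum:
  fixes f :: "'v::finite option \<Rightarrow> nat"
  shows "(\<Sum>x\<in>UNIV. zeta_sharp vinf \<beta> d z x * real (f x)) =
    pairing vinf z (\<lambda>i. f (Some i)) - real (f None) * pairing vinf z (\<lambda>i. d * \<beta> i)"
proof -
  have "(\<Sum>x\<in>UNIV. zeta_sharp vinf \<beta> d z x * real (f x)) =
     - pairing vinf z (\<lambda>i. d * \<beta> i) * real (f None) + (\<Sum>i\<in>UNIV. (if i = vinf then 0 else z i * real (f (Some i))))"
    unfolding sum_option_UNIV by (simp add: zeta_sharp_def pairing_def; rule sum.cong; simp)
  also have "\<dots> = pairing vinf z (\<lambda>i. f (Some i)) - real (f None) * pairing vinf z (\<lambda>i. d * \<beta> i)"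
    by (simp add: sum_drop_vinf pairing_def)
  finally show ?thesis .
qed

lemma pairing_zero:
  "(\<forall>i. i \<noteq> vinf \<longrightarrow> b i = 0) \<Longrightarrow> pairing vinf z b = 0"
  unfolding pairing_def by (rule sum.neutral) auto

lemma pairing_diff:
  fixes b c :: "'v::finite \<Rightarrow> nat"
  assumes "\<forall>i. i \<noteq> vinf \<longrightarrow> c i \<le> b i"
  shows "pairing vinf z (\<lambda>i. b i - c i) = pairing vinf z b - pairing vinf z c"
  unfolding pairing_def using assms
  by (auto simp add: sum_subtractf[symmetric] of_nat_diff algebra_simps intro!: sum.cong)

lemma pairing_scale:
  "pairing vinf z (\<lambda>i. d * b i) = real d * pairing vinf z b"
  unfolding pairing_def by (simp add: sum_distrib_left algebra_simps)

lemma coord_zero: "n v = 0 \<Longrightarrow> coord_space n v = {0}"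
  by (auto simp: coord_space_def fun_eq_iff)

lemma subrep_facts:
  fixes S :: "'v::finite option \<Rightarrow> (nat \<Rightarrow> complex) set"
  assumes S: "is_subrep src' tgt' (dims_sharp vinf \<beta> d) \<rho> S"
  defines "n \<equiv> dims_sharp vinf \<beta> d"
  shows "cdim (S None) \<le> 1"
    and "\<forall>i. i \<noteq> vinf \<longrightarrow> cdim (S (Some i)) \<le> d * \<beta> i"
    and "S None = coord_space n None \<longleftrightarrow> cdim (S None) = 1"
    and "S = (\<lambda>_. {0}) \<longleftrightarrow> (\<forall>i. i \<noteq> vinf \<longrightarrow> cdim (S (Some i)) = 0) \<and> cdim (S None) = 0"
    and "S = coord_space n \<longleftrightarrow> (\<forall>i. i \<noteq> vinf \<longrightarrow> cdim (S (Some i)) = d * \<beta> i) \<and> cdim (S None) = 1"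
proof -
  have sub: "\<And>x. csubspace (S x)" and le: "\<And>x. S x \<subseteq> coord_space n x"
    using S unfolding is_subrep_def n_def by auto
  have nN: "n None = 1" and nS: "\<And>i. i \<noteq> vinf \<Longrightarrow> n (Some i) = d * \<beta> i"
    and nI: "n (Some vinf) = 0"
    by (auto simp: n_def dims_sharp_def)
  have Sinf: "S (Some vinf) = {0}"
  proof -
    have "S (Some vinf) \<subseteq> {0}" using le[of "Some vinf"] coord_zero[of n, OF nI] by simp
    moreover have "0 \<in> S (Some vinf)" using sub[of "Some vinf"]
      unfolding csubspace_def cvs.subspace_def by simp
    ultimately show ?thesis by blast
  qed
  show "cdim (S None) \<le> 1" using cdim_le[OF le[of None]] nN by simp
  show "\<forall>i. i \<noteq> vinf \<longrightarrow> cdim (S (Some i)) \<le> d * \<beta> i" using cdim_le[OF le] nS by metis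
  show "S None = coord_space n None \<longleftrightarrow> cdim (S None) = 1"
    using cdim_full[OF sub le[of None]] cdim_coord[of n None] nN by metis
  have z: "\<And>x. S x = {0} \<longleftrightarrow> cdim (S x) = 0"
    using cdim_zero[OF sub le] cdim_0 by metis
  have f: "\<And>x. S x = coord_space n x \<longleftrightarrow> cdim (S x) = n x"
    using cdim_full[OF sub le] cdim_coord by metis
  have allopt: "\<And>P. (\<forall>x. P x) \<longleftrightarrow> P None \<and> (\<forall>i. i \<noteq> vinf \<longrightarrow> P (Some i)) \<and> P (Some vinf)"
    by (metis option.exhaust)
  show "S = (\<lambda>_. {0}) \<longleftrightarrow> (\<forall>i. i \<noteq> vinf \<longrightarrow> cdim (S (Some i)) = 0) \<and> cdim (S None) = 0"
  proof -
    have "S = (\<lambda>_. {0}) \<longleftrightarrow> (\<forall>x. cdim (S x) = 0)" using z by (simp add: fun_eq_iff)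
    also have "\<dots> \<longleftrightarrow> cdim (S None) = 0 \<and> (\<forall>i. i \<noteq> vinf \<longrightarrow> cdim (S (Some i)) = 0) \<and> cdim (S (Some vinf)) = 0"
      by (rule allopt)
    finally show ?thesis using Sinf cdim_0 by (metis (no_types) conj_commute)
  qed
  show "S = coord_space n \<longleftrightarrow> (\<forall>i. i \<noteq> vinf \<longrightarrow> cdim (S (Some i)) = d * \<beta> i) \<and> cdim (S None) = 1"
  proof -
    have "S = coord_space n \<longleftrightarrow> (\<forall>x. cdim (S x) = n x)" using f by (simp add: fun_eq_iff)
    also have "\<dots> \<longleftrightarrow> cdim (S None) = n None \<and> (\<forall>i. i \<noteq> vinf \<longrightarrow> cdim (S (Some i)) = n (Some i)) \<and> cdim (S (Some vinf)) = n (Some vinf)"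
      by (rule allopt)
    also have "\<dots> \<longleftrightarrow> (\<forall>i. i \<noteq> vinf \<longrightarrow> cdim (S (Some i)) = d * \<beta> i) \<and> cdim (S None) = 1"
    proof -
      have a: "cdim (S (Some vinf)) = n (Some vinf)" using Sinf cdim_0 nI by simp
      have b: "(\<forall>i. i \<noteq> vinf \<longrightarrow> cdim (S (Some i)) = n (Some i)) \<longleftrightarrow> (\<forall>i. i \<noteq> vinf \<longrightarrow> cdim (S (Some i)) = d * \<beta> i)"
        by (simp add: nS)
      show ?thesis using a b nN by auto
    qed
    finally show ?thesis .
  qed
qed



theorem lemma4p1:
  fixes src tgt :: "'e::finite \<Rightarrow> 'v::finite"
    and rels :: "('v \<times> 'v \<times> (complex \<times> 'e list) list) set"
    and vinf v0 :: 'v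
    and \<alpha> \<beta> :: "'v \<Rightarrow> nat"
    and zbar \<zeta> :: "'v \<Rightarrow> real"
    and d :: nat
    and \<rho> :: "'e option \<Rightarrow> nat \<Rightarrow> nat \<Rightarrow> complex"
  assumes framed: "\<forall>(v, w, l) \<in> rels. v \<noteq> vinf \<and> w \<noteq> vinf \<and>
                      (\<forall>(c, p) \<in> set l. is_path src tgt v w p)"
    and alpha_inf: "\<alpha> vinf = 1"
    and beta: "wall_vec vinf \<alpha> \<beta>"
    and zbar_wall: "zbar \<in> wall vinf \<beta>"
    and zbar_gen: "\<forall>b. wall_vec vinf \<alpha> b \<longrightarrow> zbar \<in> wall vinf b \<longrightarrow> wall vinf b = wall vinf \<beta>"
    and v0: "v0 \<noteq> vinf" "\<beta> v0 \<noteq> 0"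
    and d: "d \<ge> 1" "\<forall>i. i \<noteq> vinf \<longrightarrow> d * \<beta> i \<le> \<alpha> i"
    and chamber: "\<exists>C \<in> chambers vinf \<alpha>. \<zeta> \<in> C \<and> zbar \<in> closure C \<and> pairing vinf \<zeta> \<beta> < 0"
    and rep: "is_rep (src_sharp src) (tgt_sharp tgt v0) (rels_sharp rels) (dims_sharp vinf \<beta> d) \<rho>"
  shows "stable (src_sharp src) (tgt_sharp tgt v0) (dims_sharp vinf \<beta> d) \<rho> (zeta_sharp vinf \<beta> d \<zeta>)
     \<longleftrightarrow> semistable (src_sharp src) (tgt_sharp tgt v0) (dims_sharp vinf \<beta> d) \<rho> (ext_I vinf zbar)
         \<and> (\<forall>S. is_subrep (src_sharp src) (tgt_sharp tgt v0) (dims_sharp vinf \<beta> d) \<rho> S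
               \<longrightarrow> (\<Sum>x\<in>UNIV. ext_I vinf zbar x * real (cdim (S x))) = 0
               \<longrightarrow> S None = coord_space (dims_sharp vinf \<beta> d) None
               \<longrightarrow> S = coord_space (dims_sharp vinf \<beta> d))"
proof -
  obtain C where C: "C \<in> chambers vinf \<alpha>" "\<zeta> \<in> C" "zbar \<in> closure C"
    and Pb: "pairing vinf \<zeta> \<beta> < 0" using chamber by blast
  have zbRI: "zbar \<in> RI vinf" and Zb: "pairing vinf zbar \<beta> = 0"
    using zbar_wall by (auto simp: wall_def)
  have zRI: "\<zeta> \<in> RI vinf"
  proof -
    obtain z0 where "C = connected_component_set (wall_complement vinf \<alpha>) z0"
      using C(1) unfolding chambers_def by blast
    then have "C \<subseteq> wall_complement vinf \<alpha>" by (simp add: connected_component_subset)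
    moreover have "wall_complement vinf \<alpha> \<subseteq> RI vinf" unfolding wall_complement_def by (rule Diff_subset)
    ultimately show ?thesis using C(2) by (meson subsetD)
  qed
  have K: "\<And>b. (\<forall>i. i \<noteq> vinf \<longrightarrow> b i \<le> d * \<beta> i) \<Longrightarrow> pairing vinf zbar b \<noteq> 0 \<or> (\<exists>i. i \<noteq> vinf \<and> b i \<noteq> 0) \<Longrightarrow>
      (pairing vinf zbar b > 0 \<longrightarrow> pairing vinf \<zeta> b > 0) \<and>
      (pairing vinf zbar b < 0 \<longrightarrow> pairing vinf \<zeta> b < 0) \<and>
      (pairing vinf zbar b = 0 \<longrightarrow> pairing vinf \<zeta> b < 0)"
  proof -
    fix b :: "'v \<Rightarrow> nat"
    assume le: "\<forall>i. i \<noteq> vinf \<longrightarrow> b i \<le> d * \<beta> i"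
      and nz: "pairing vinf zbar b \<noteq> 0 \<or> (\<exists>i. i \<noteq> vinf \<and> b i \<noteq> 0)"
    have "\<exists>i. i \<noteq> vinf \<and> b i \<noteq> 0"
    proof (rule ccontr)
      assume "\<not> (\<exists>i. i \<noteq> vinf \<and> b i \<noteq> 0)"
      then have a: "\<forall>i. i \<noteq> vinf \<longrightarrow> b i = 0" by blast
      then have "pairing vinf zbar b = 0" by (rule pairing_zero)
      then show False using nz a by (meson neq0_conv)
    qed
    moreover have "\<forall>i. i \<noteq> vinf \<longrightarrow> b i \<le> \<alpha> i"
    proof (intro allI impI)
      fix i assume i: "i \<noteq> vinf"
      show "b i \<le> \<alpha> i" using le[rule_format, OF i] d(2)[rule_format, OF i] by linarith
    qed
    ultimately have w: "wall_vec vinf \<alpha> b" unfolding wall_vec_def by blast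
    have "pairing vinf zbar b = 0 \<longrightarrow> pairing vinf \<zeta> b < 0"
    proof
      assume "pairing vinf zbar b = 0"
      then have "zbar \<in> wall vinf b" using zbRI by (simp add: wall_def)
      then have "wall vinf b = wall vinf \<beta>" using zbar_gen w by blast
      then show "pairing vinf \<zeta> b < 0"
        using prop_sign[OF _ zRI chamber_nz[OF C(1,2) w] Pb v0] by blast
    qed
    then show "(pairing vinf zbar b > 0 \<longrightarrow> pairing vinf \<zeta> b > 0) \<and>
      (pairing vinf zbar b < 0 \<longrightarrow> pairing vinf \<zeta> b < 0) \<and>
      (pairing vinf zbar b = 0 \<longrightarrow> pairing vinf \<zeta> b < 0)"
      using chamber_sign[OF C w] by blast
  qed
  let ?s = "src_sharp src" and ?t = "tgt_sharp tgt v0" and ?n = "dims_sharp vinf \<beta> d"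
  let ?db = "\<lambda>i. d * \<beta> i"
  have Pdb: "pairing vinf \<zeta> ?db < 0" using Pb d(1) by (simp add: pairing_scale mult_pos_neg)
  have Zdb: "pairing vinf zbar ?db = 0" using Zb by (simp add: pairing_scale)
  have T: "pairing vinf z (\<lambda>i. d * \<beta> i - cdim (S (Some i))) = pairing vinf z ?db - pairing vinf z (\<lambda>i. cdim (S (Some i)))"
    if "is_subrep ?s ?t ?n \<rho> S" for S z
    by (rule pairing_diff[OF subrep_facts(2)[OF that]])
  have Tle: "\<forall>i. i \<noteq> vinf \<longrightarrow> d * \<beta> i - cdim (S (Some i)) \<le> d * \<beta> i" for S by simp
  have Tnz: "(\<exists>i. i \<noteq> vinf \<and> d * \<beta> i - cdim (S (Some i)) \<noteq> 0)"
    if "is_subrep ?s ?t ?n \<rho> S" "S \<noteq> coord_space ?n" "cdim (S None) = 1" for S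
  proof (rule ccontr)
    assume "\<not> (\<exists>i. i \<noteq> vinf \<and> d * \<beta> i - cdim (S (Some i)) \<noteq> 0)"
    then have h: "\<forall>i. i \<noteq> vinf \<longrightarrow> d * \<beta> i \<le> cdim (S (Some i))" by (metis diff_is_0_eq)
    have "\<forall>i. i \<noteq> vinf \<longrightarrow> cdim (S (Some i)) = d * \<beta> i"
    proof (intro allI impI)
      fix i assume i: "i \<noteq> vinf"
      show "cdim (S (Some i)) = d * \<beta> i"
        using h[rule_format, OF i] subrep_facts(2)[OF that(1), rule_format, OF i] by linarith
    qed
    then show False using subrep_facts(5)[OF that(1)] that(2,3) by simp
  qed
  have Snz: "(\<exists>i. i \<noteq> vinf \<and> cdim (S (Some i)) \<noteq> 0)"
    if "is_subrep ?s ?t ?n \<rho> S" "S \<noteq> (\<lambda>_. {0})" "cdim (S None) = 0" for S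
  proof (rule ccontr)
    assume "\<not> (\<exists>i. i \<noteq> vinf \<and> cdim (S (Some i)) \<noteq> 0)"
    then have "\<forall>i. i \<noteq> vinf \<longrightarrow> cdim (S (Some i)) = 0" by blast
    then show False using subrep_facts(4)[OF that(1)] that(2,3) by simp
  qed
  show ?thesis
  proof
    assume st: "stable ?s ?t ?n \<rho> (zeta_sharp vinf \<beta> d \<zeta>)"
    have st': "pairing vinf \<zeta> (\<lambda>i. cdim (S (Some i))) - real (cdim (S None)) * pairing vinf \<zeta> ?db < 0"
      if "is_subrep ?s ?t ?n \<rho> S" "S \<noteq> (\<lambda>_. {0})" "S \<noteq> coord_space ?n" for S
      using st that unfolding stable_def zs_sum by blast
    have ss: "semistable ?s ?t ?n \<rho> (ext_I vinf zbar)"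
      unfolding semistable_def ext_sum
    proof (intro allI impI)
      fix S assume S: "is_subrep ?s ?t ?n \<rho> S"
      let ?v = "\<lambda>i. cdim (S (Some i))"
      show "pairing vinf zbar ?v \<le> 0"
      proof (rule ccontr)
        assume "\<not> ?thesis"
        then have pos: "pairing vinf zbar ?v > 0" by simp
        then have Ppos: "pairing vinf \<zeta> ?v > 0" using K[of ?v] subrep_facts(2)[OF S] by auto
        have "cdim (S None) = 0 \<or> cdim (S None) = 1" using subrep_facts(1)[OF S] by linarith
        then show False
        proof
          assume e: "cdim (S None) = 0"
          have "S \<noteq> (\<lambda>_. {0})"
          proof
            assume "S = (\<lambda>_. {0})"
            then have "\<forall>i. i \<noteq> vinf \<longrightarrow> ?v i = 0" using subrep_facts(4)[OF S] by simp
            then have "pairing vinf zbar ?v = 0" by (rule pairing_zero)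
            then show False using pos by simp
          qed
          moreover have "S \<noteq> coord_space ?n" using subrep_facts(5)[OF S] e by simp
          ultimately show False using st'[OF S] e Ppos by simp
        next
          assume e: "cdim (S None) = 1"
          have "S \<noteq> (\<lambda>_. {0})" using subrep_facts(4)[OF S] e by simp
          moreover have "S \<noteq> coord_space ?n"
          proof
            assume "S = coord_space ?n"
            then have "\<forall>i. i \<noteq> vinf \<longrightarrow> ?v i = d * \<beta> i" using subrep_facts(5)[OF S] by simp
            then have "pairing vinf zbar ?v = pairing vinf zbar ?db"
              unfolding pairing_def by (intro sum.cong) auto
            then show False using pos Zdb by simp
          qed
          ultimately show False using st'[OF S] e Ppos Pdb by simp
        qed
      qed
    qed
    moreover have "\<forall>S. is_subrep ?s ?t ?n \<rho> S
               \<longrightarrow> (\<Sum>x\<in>UNIV. ext_I vinf zbar x * real (cdim (S x))) = 0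
               \<longrightarrow> S None = coord_space ?n None
               \<longrightarrow> S = coord_space ?n"
    proof (intro allI impI)
      fix S assume S: "is_subrep ?s ?t ?n \<rho> S"
        and Z: "(\<Sum>x\<in>UNIV. ext_I vinf zbar x * real (cdim (S x))) = 0"
        and N: "S None = coord_space ?n None"
      let ?v = "\<lambda>i. cdim (S (Some i))"
      have Z': "pairing vinf zbar ?v = 0" using Z by (simp add: ext_sum)
      have e: "cdim (S None) = 1" using subrep_facts(3)[OF S] N by simp
      show "S = coord_space ?n"
      proof (rule ccontr)
        assume ne: "S \<noteq> coord_space ?n"
        have "pairing vinf zbar (\<lambda>i. d * \<beta> i - ?v i) = 0" using T[OF S] Z' Zdb by simp
        then have "pairing vinf \<zeta> (\<lambda>i. d * \<beta> i - ?v i) < 0"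
          using K[OF Tle Tnz[OF S ne e, THEN disjI2]] by blast
        then have a: "pairing vinf \<zeta> ?db - pairing vinf \<zeta> ?v < 0" using T[OF S] by simp
        have "S \<noteq> (\<lambda>_. {0})" using subrep_facts(4)[OF S] e by simp
        then show False using st'[OF S _ ne] e a by simp
      qed
    qed
    ultimately show "semistable ?s ?t ?n \<rho> (ext_I vinf zbar) \<and> (\<forall>S. is_subrep ?s ?t ?n \<rho> S
               \<longrightarrow> (\<Sum>x\<in>UNIV. ext_I vinf zbar x * real (cdim (S x))) = 0
               \<longrightarrow> S None = coord_space ?n None
               \<longrightarrow> S = coord_space ?n)" by blast
  next
    assume H: "semistable ?s ?t ?n \<rho> (ext_I vinf zbar) \<and> (\<forall>S. is_subrep ?s ?t ?n \<rho> S
               \<longrightarrow> (\<Sum>x\<in>UNIV. ext_I vinf zbar x * real (cdim (S x))) = 0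
               \<longrightarrow> S None = coord_space ?n None
               \<longrightarrow> S = coord_space ?n)"
    show "stable ?s ?t ?n \<rho> (zeta_sharp vinf \<beta> d \<zeta>)"
      unfolding stable_def zs_sum
    proof (intro allI impI)
      fix S assume S: "is_subrep ?s ?t ?n \<rho> S" and n0: "S \<noteq> (\<lambda>_. {0})" and nU: "S \<noteq> coord_space ?n"
      let ?v = "\<lambda>i. cdim (S (Some i))"
      have ssS: "pairing vinf zbar ?v \<le> 0" using H S unfolding semistable_def ext_sum by blast
      have "cdim (S None) = 0 \<or> cdim (S None) = 1" using subrep_facts(1)[OF S] by linarith
      then show "pairing vinf \<zeta> ?v - real (cdim (S None)) * pairing vinf \<zeta> ?db < 0"
      proof
        assume e: "cdim (S None) = 0"
        have "pairing vinf \<zeta> ?v < 0"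
          using K[OF subrep_facts(2)[OF S] Snz[OF S n0 e, THEN disjI2]] ssS by linarith
        then show ?thesis using e by simp
      next
        assume e: "cdim (S None) = 1"
        have "pairing vinf zbar ?v \<noteq> 0"
        proof
          assume "pairing vinf zbar ?v = 0"
          then have "S = coord_space ?n" using H S subrep_facts(3)[OF S] e by (simp add: ext_sum)
          then show False using nU by simp
        qed
        then have "pairing vinf zbar (\<lambda>i. d * \<beta> i - ?v i) > 0" using T[OF S] ssS Zdb by simp
        then have "pairing vinf \<zeta> (\<lambda>i. d * \<beta> i - ?v i) > 0"
          using K[OF Tle] by auto
        then show ?thesis using T[OF S] e by simp
      qed
    qed
  qed
qed

end
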